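(* Consider integers $0=z_0\le z_1\le\cdots\le z_k\le z_{k+1}=k$ with $z_i\ge i-1$ for all $i\in\{1,\dots,k\}$. Let $\mathbf{a}=(a_1,\dots,a_k)\in\mathbb{N}^k$ with $a_1\cdots a_k$ squarefree. Then $$L^{(k+1)}(\mathbf{a})\le\sum_{\substack{d_j\mid a_j\\1\le j\le k}}\left(\prod_{j=1}^k(z_j-j+1)^{\omega(d_j)}\right)\min\left\{\prod_{j=0}^k\log^{z_{j+1}-z_j}(2a_1\cdots a_j),\ (\log2)^k\prod_{j=1}^k(k-z_j+1)^{\omega(a_j/d_j)}\right\},$$ with the convention $0^0=1$ (and the empty product $a_1\cdots a_0=1$).
   Context: For $\mathbf{a}\in\mathbb{N}^k$, $L^{(k+1)}(\mathbf{a})$ is the $k$-dimensional Lebesgue measure of $\bigcup[\log(d_1/2),\log d_1)\times\cdots\times[\log(d_k/2),\log d_k)$ over all $(d_1,\dots,d_k)\in\mathbb{N}^k$ with $d_1\cdots d_i\mid a_1\cdots a_i$ for $1\le i\le k$. $\omega(n)$ is the number of distinct prime factors of $n$. *)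

theory Defs
  imports "HOL-Analysis.Analysis" "HOL-Computational_Algebra.Computational_Algebra"
begin

definition omega :: "nat \<Rightarrow> nat" where
  "omega n = card (prime_factors n)"

text \<open>Vectors in R^k are functions nat => real on the index set {1..k}
  (extensional, as in PiM); the k-dimensional Lebesgue measure is the
  product measure PiM {1..k} (\<lambda>_. lborel).\<close>
definition admissible_d :: "nat \<Rightarrow> (nat \<Rightarrow> nat) \<Rightarrow> (nat \<Rightarrow> nat) set" where
  "admissible_d k a = {d \<in> {1..k} \<rightarrow>\<^sub>E {1..}.
      \<forall>i\<in>{1..k}. (\<Prod>j=1..i. d j) dvd (\<Prod>j=1..i. a j)}"

definition Lk :: "nat \<Rightarrow> (nat \<Rightarrow> nat) \<Rightarrow> real" where
  "Lk k a = measure (PiM {1..k} (\<lambda>_. lborel))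
     (\<Union>d\<in>admissible_d k a.
        PiE {1..k} (\<lambda>i. {ln (real (d i) / 2) ..< ln (real (d i))}))"

end

theory Submission
  imports Defs
begin


lemma prod_primes_dvd_nat:
  fixes n :: nat
  assumes "finite Q" "\<And>q. q \<in> Q \<Longrightarrow> prime q \<and> q dvd n"
  shows "\<Prod>Q dvd n"
  using assms
proof (induction Q rule: finite_induct)
  case empty then show ?case by simp
next
  case (insert q Q)
  have q: "prime q" "q dvd n" using insert.prems by auto
  have "\<not> q dvd \<Prod>Q"
  proof
    assume "q dvd \<Prod>Q"
    then obtain r where r: "r \<in> Q" "q dvd r"
      using prime_dvd_prod_iff[OF insert.hyps(1) q(1), of id] by auto
    have "prime r" using insert.prems r(1) by auto
    then have "q = r" using primes_dvd_imp_eq q(1) r(2) by blast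
    then show False using r(1) insert.hyps(2) by simp
  qed
  then have "coprime q (\<Prod>Q)" using prime_imp_coprime q(1) by blast
  moreover have "\<Prod>Q dvd n" using insert by auto
  ultimately show ?case using insert.hyps divides_mult q(2) by simp
qed

lemma prime_dvd_prod_primes_iff:
  fixes p :: nat
  assumes "finite Q" "\<And>q. q \<in> Q \<Longrightarrow> prime q" "prime p"
  shows "p dvd \<Prod>Q \<longleftrightarrow> p \<in> Q"
proof
  assume "p dvd \<Prod>Q"
  then obtain r where r: "r \<in> Q" "p dvd r"
    using prime_dvd_prod_iff[OF assms(1) assms(3), of id] by auto
  then have "p = r" using primes_dvd_imp_eq assms by blast
  then show "p \<in> Q" using r by simp
next
  assume "p \<in> Q" then show "p dvd \<Prod>Q" using assms(1) dvd_prodI[of Q p "\<lambda>x. x"] by simp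
qed

lemma prod_primes_pos:
  fixes Q :: "nat set"
  assumes "\<And>q. q \<in> Q \<Longrightarrow> prime q"
  shows "\<Prod>Q \<ge> 1"
proof -
  have "\<Prod>Q \<noteq> 0" using assms by (metis not_prime_0 prod_zero_iff prod.infinite zero_neq_one)
  then show ?thesis by simp
qed

lemma sqf_prod_pf:
  fixes n :: nat
  assumes "squarefree n"
  shows "\<Prod>(prime_factors n) = n"
proof -
  have n0: "n \<noteq> 0" using assms by (metis not_squarefree_0)
  have "(\<Prod>p \<in> prime_factors n. p ^ multiplicity p n) = n"
    using prod_prime_factors[OF n0] by simp
  moreover have "\<And>p. p \<in> prime_factors n \<Longrightarrow> multiplicity p n = 1"
  proof -
    fix p assume p: "p \<in> prime_factors n"
    then have "prime p" "p dvd n" by auto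
    then have "multiplicity p n > 0" using n0 by (simp add: prime_multiplicity_gt_zero_iff)
    moreover have "multiplicity p n \<le> 1"
      using squarefree_factorial_semiring''[OF n0] assms \<open>prime p\<close> by blast
    ultimately show "multiplicity p n = 1" by simp
  qed
  ultimately show ?thesis by (metis (no_types, lifting) power_one_right prod.cong)
qed

lemma sqf_two:
  fixes f :: "'a \<Rightarrow> nat"
  assumes "finite I" "i \<in> I" "j \<in> I" "i \<noteq> j" "squarefree (prod f I)"
    "prime p" "p dvd f i" "p dvd f j"
  shows False
proof -
  have "prod f I = f i * prod f (I - {i})" using assms by (simp add: prod.remove)
  moreover have "prod f (I - {i}) = f j * prod f (I - {i} - {j})"
    using assms by (intro prod.remove) auto
  ultimately have "f i * f j dvd prod f I" by simp
  moreover have "p ^ 2 dvd f i * f j" using assms(7,8) by (simp add: power2_eq_square mult_dvd_mono)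
  ultimately have "p ^ 2 dvd prod f I" using dvd_trans by blast
  then have "p dvd 1" using squarefreeD assms(5) by blast
  then show False using assms(6) by simp
qed

lemma pf_quot:
  fixes a t p :: nat
  assumes "squarefree a" "t dvd a"
  shows "p \<in> prime_factors (a div t) \<longleftrightarrow> p \<in> prime_factors a \<and> \<not> p dvd t"
proof -
  have a0: "a \<noteq> 0" using assms by (metis not_squarefree_0)
  have eq: "a = t * (a div t)" using assms(2) by simp
  then have q0: "a div t \<noteq> 0" using a0 by (metis mult_0_right)
  show ?thesis
  proof
    assume p: "p \<in> prime_factors (a div t)"
    then have pp: "prime p" "p dvd a div t" by auto
    then have "p dvd a" using eq by (metis dvd_mult)
    moreover have "\<not> p dvd t"
    proof
      assume "p dvd t"
      then have "p ^ 2 dvd a" using pp eq by (metis mult_dvd_mono power2_eq_square)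
      then show False using squarefreeD assms(1) pp(1) by (metis not_prime_unit)
    qed
    ultimately show "p \<in> prime_factors a \<and> \<not> p dvd t" using pp a0 by (auto intro: prime_factorsI)
  next
    assume p: "p \<in> prime_factors a \<and> \<not> p dvd t"
    then have "prime p" "p dvd t * (a div t)" using eq by auto
    then have "p dvd a div t" using p prime_dvd_mult_iff by blast
    then show "p \<in> prime_factors (a div t)" using q0 \<open>prime p\<close> by (auto intro: prime_factorsI)
  qed
qed

lemma pf_dvd:
  fixes a t p :: nat
  assumes "a \<noteq> 0" "t dvd a"
  shows "p \<in> prime_factors t \<longleftrightarrow> p \<in> prime_factors a \<and> p dvd t"
  using assms by (auto simp: in_prime_factors_iff intro: dvd_trans)



lemma psf: "product_sigma_finite (\<lambda>_. lborel :: real measure)"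
  by standard

locale setup2 =
  fixes k :: nat and a :: "nat \<Rightarrow> nat" and Z :: "nat \<Rightarrow> nat"
  assumes apos: "\<forall>j\<in>{1..k}. a j \<ge> 1"
  and sqf: "squarefree (\<Prod>j=1..k. a j)"
  and Z0: "Z 0 = 0" and Zk: "Z (k+1) = k"
  and Zmono: "\<forall>i\<le>k. Z i \<le> Z (Suc i)"
  and Zlow: "\<forall>i\<in>{1..k}. i \<le> Z i + 1"
begin

definition Aprod where "Aprod i = (\<Prod>j=1..i. a j)"
definition Ps where "Ps = prime_factors (Aprod k)"
definition jp where "jp p = (THE j. j \<in> {1..k} \<and> p dvd a j)"
definition Ts where "Ts = PiE {1..k} (\<lambda>j. {e. e dvd a j})"

lemma Zmono': "i \<le> j \<Longrightarrow> j \<le> k+1 \<Longrightarrow> Z i \<le> Z j"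
proof (induction j)
  case 0 then show ?case by simp
next
  case (Suc j)
  show ?case
  proof (cases "i = Suc j")
    case True then show ?thesis by simp
  next
    case False
    then have "Z i \<le> Z j" using Suc by simp
    moreover have "Z j \<le> Z (Suc j)" using Zmono Suc.prems by simp
    ultimately show ?thesis by simp
  qed
qed

lemma Z_le_k: "j \<le> k+1 \<Longrightarrow> Z j \<le> k"
  using Zmono'[of j "k+1"] Zk by simp

lemma A_pos: "Aprod i \<ge> 1" if "i \<le> k"
  unfolding Aprod_def using apos that by (intro prod_ge_1) auto

lemma a_dvd_A: "1 \<le> j \<Longrightarrow> j \<le> i \<Longrightarrow> a j dvd Aprod i"
  unfolding Aprod_def by (intro dvd_prodI) auto

lemma A_dvd: "i \<le> i' \<Longrightarrow> Aprod i dvd Aprod i'"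
  unfolding Aprod_def by (intro prod_dvd_prod_subset) auto

lemma sqfA: "squarefree (Aprod k)" using sqf unfolding Aprod_def .

lemma Ak0: "Aprod k \<noteq> 0" using A_pos[of k] by simp

lemma Ps_fin: "finite Ps" unfolding Ps_def by simp

lemma a_sqf: "j \<in> {1..k} \<Longrightarrow> squarefree (a j)"
  using squarefree_mono[OF a_dvd_A[of j k] sqfA] by auto

lemma a0: "j \<in> {1..k} \<Longrightarrow> a j \<noteq> 0" using apos by fastforce

lemma Ps_prime: "p \<in> Ps \<Longrightarrow> prime p" unfolding Ps_def by auto

lemma jp_unique:
  assumes "p \<in> Ps" "j \<in> {1..k}" "p dvd a j"
  shows "jp p = j"
  unfolding jp_def
proof (rule the_equality)
  show "j \<in> {1..k} \<and> p dvd a j" using assms by simp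
next
  fix j' assume j': "j' \<in> {1..k} \<and> p dvd a j'"
  show "j' = j"
  proof (rule ccontr)
    assume "j' \<noteq> j"
    then show False using sqf_two[of "{1..k}" j' j "a" p] j' assms sqf Ps_prime by auto
  qed
qed

lemma jp_ex: assumes "p \<in> Ps" shows "jp p \<in> {1..k}" "p dvd a (jp p)"
proof -
  have "p dvd Aprod k" using assms unfolding Ps_def by auto
  then obtain j where j: "j \<in> {1..k}" "p dvd a j"
    using prime_dvd_prod_iff[of "{1..k}" p a] Ps_prime[OF assms] unfolding Aprod_def by auto
  then have "jp p = j" using jp_unique assms by blast
  then show "jp p \<in> {1..k}" "p dvd a (jp p)" using j by auto
qed

lemma P_iff: assumes "j \<in> {1..k}"
  shows "p \<in> prime_factors (a j) \<longleftrightarrow> p \<in> Ps \<and> jp p = j"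
proof
  assume p: "p \<in> prime_factors (a j)"
  then have "p dvd Aprod k" using a_dvd_A[of j k] assms by (auto intro: dvd_trans)
  then have "p \<in> Ps" unfolding Ps_def using p Ak0 by (auto intro: prime_factorsI)
  then show "p \<in> Ps \<and> jp p = j" using jp_unique assms p by auto
next
  assume "p \<in> Ps \<and> jp p = j"
  then show "p \<in> prime_factors (a j)" using jp_ex[of p] Ps_prime a0[OF assms]
    by (auto intro: prime_factorsI)
qed

lemma P_Union: "Ps = (\<Union>j\<in>{1..k}. prime_factors (a j))"
  using P_iff jp_ex by blast

lemma T_dvd: "t \<in> Ts \<Longrightarrow> j \<in> {1..k} \<Longrightarrow> t j dvd a j"
  unfolding Ts_def by (auto simp: PiE_iff)

lemma regroup:
  fixes c1 c2 :: "nat \<Rightarrow> real"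
  assumes t: "t \<in> Ts"
  shows "(\<Prod>p\<in>Ps. if p dvd t (jp p) then c1 (jp p) else c2 (jp p))
       = (\<Prod>j=1..k. c1 j ^ omega (t j) * c2 j ^ omega (a j div t j))"
proof -
  have "(\<Prod>p\<in>Ps. if p dvd t (jp p) then c1 (jp p) else c2 (jp p))
     = (\<Prod>j\<in>{1..k}. \<Prod>p\<in>prime_factors (a j). if p dvd t (jp p) then c1 (jp p) else c2 (jp p))"
    unfolding P_Union by (rule prod.UNION_disjoint) (auto simp: P_iff)
  also have "\<dots> = (\<Prod>j=1..k. c1 j ^ omega (t j) * c2 j ^ omega (a j div t j))"
  proof (rule prod.cong[OF refl])
    fix j assume j: "j \<in> {1..k}"
    have td: "t j dvd a j" using T_dvd[OF t j] .
    have "(\<Prod>p\<in>prime_factors (a j). if p dvd t (jp p) then c1 (jp p) else c2 (jp p))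
        = (\<Prod>p\<in>prime_factors (a j). if p dvd t j then c1 j else c2 j)"
      by (rule prod.cong) (auto simp: P_iff[OF j])
    also have "\<dots> = c1 j ^ card (prime_factors (a j) \<inter> {p. p dvd t j})
                  * c2 j ^ card (prime_factors (a j) \<inter> - {p. p dvd t j})"
      by (simp add: prod.If_cases)
    also have "prime_factors (a j) \<inter> {p. p dvd t j} = prime_factors (t j)"
      using pf_dvd[OF a0[OF j] td] by auto
    also have "prime_factors (a j) \<inter> - {p. p dvd t j} = prime_factors (a j div t j)"
      using pf_quot[OF a_sqf[OF j] td] by auto
    finally show "(\<Prod>p\<in>prime_factors (a j). if p dvd t (jp p) then c1 (jp p) else c2 (jp p))
        = c1 j ^ omega (t j) * c2 j ^ omega (a j div t j)" by (simp add: omega_def)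
  qed
  finally show ?thesis .
qed

end


context setup2 begin

definition Ft where "Ft t = PiE Ps (\<lambda>p. if p dvd t (jp p) then {jp p..Z (jp p)} else {Z (jp p)+1..k+1})"
definition St where "St t = {p\<in>Ps. p dvd t (jp p)}"
definition Gt where "Gt t = PiE (St t) (\<lambda>p. {jp p..Z (jp p)})"
definition box :: "(nat \<Rightarrow> nat) \<Rightarrow> (nat \<Rightarrow> real) set" where
  "box d = PiE {1..k} (\<lambda>i. {ln (real (d i) / 2) ..< ln (real (d i))})"
definition df where "df f i = \<Prod>{p\<in>Ps. f p = i}"

lemma St_fin: "finite (St t)" unfolding St_def using Ps_fin by simp
lemma Ft_fin: "finite (Ft t)" unfolding Ft_def using Ps_fin by (intro finite_PiE) auto
lemma Gt_fin: "finite (Gt t)" unfolding Gt_def using St_fin by (intro finite_PiE) auto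
lemma Ts_fin: "finite Ts" unfolding Ts_def using a0 by (intro finite_PiE) (auto intro: finite_divisors_nat)

lemma card_Ft: assumes t: "t \<in> Ts"
  shows "real (card (Ft t)) = (\<Prod>j=1..k. real (Z j + 1 - j) ^ omega (t j) * real (k + 1 - Z j) ^ omega (a j div t j))"
proof -
  have "card (Ft t) = (\<Prod>p\<in>Ps. if p dvd t (jp p) then Z (jp p) + 1 - jp p else k + 1 - Z (jp p))"
    unfolding Ft_def by (simp add: card_PiE Ps_fin) (intro prod.cong refl, auto)
  then have "real (card (Ft t)) = (\<Prod>p\<in>Ps. if p dvd t (jp p) then real (Z (jp p) + 1 - jp p) else real (k + 1 - Z (jp p)))"
    by (simp add: of_nat_prod if_distrib[of real])
  also have "\<dots> = (\<Prod>j=1..k. real (Z j + 1 - j) ^ omega (t j) * real (k + 1 - Z j) ^ omega (a j div t j))"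
    by (rule regroup[OF t])
  finally show ?thesis .
qed

lemma card_Gt: assumes t: "t \<in> Ts"
  shows "real (card (Gt t)) = (\<Prod>j=1..k. real (Z j + 1 - j) ^ omega (t j))"
proof -
  have "card (Gt t) = (\<Prod>p\<in>St t. Z (jp p) + 1 - jp p)"
    unfolding Gt_def by (simp add: card_PiE St_fin)
  also have "\<dots> = (\<Prod>p\<in>Ps. if p dvd t (jp p) then Z (jp p) + 1 - jp p else 1)"
    unfolding St_def by (rule prod.inter_filter[OF Ps_fin])
  finally have "real (card (Gt t)) = (\<Prod>p\<in>Ps. if p dvd t (jp p) then real (Z (jp p) + 1 - jp p) else real 1)"
    by (simp add: of_nat_prod if_distrib[of real])
  also have "\<dots> = (\<Prod>j=1..k. real (Z j + 1 - j) ^ omega (t j) * real 1 ^ omega (a j div t j))"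
    by (rule regroup[OF t])
  finally show ?thesis by simp
qed

lemma f_in_Ft:
  assumes ext: "f \<in> extensional Ps" and rng: "\<forall>p\<in>Ps. jp p \<le> f p \<and> f p \<le> k+1"
  shows "\<exists>t\<in>Ts. f \<in> Ft t"
proof -
  define t where "t = restrict (\<lambda>j. \<Prod>{q\<in>prime_factors (a j). f q \<le> Z j}) {1..k}"
  have "t \<in> Ts" unfolding Ts_def t_def
  proof (rule PiE_I)
    fix j assume j: "j \<in> {1..k}"
    have "\<Prod>{q\<in>prime_factors (a j). f q \<le> Z j} dvd a j"
      by (rule prod_primes_dvd_nat) auto
    then show "restrict (\<lambda>j. \<Prod>{q\<in>prime_factors (a j). f q \<le> Z j}) {1..k} j \<in> {e. e dvd a j}"
      using j by simp
  qed auto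
  moreover have "f \<in> Ft t" unfolding Ft_def
  proof (rule PiE_I)
    fix p assume p: "p \<in> Ps"
    define j where "j = jp p"
    have j: "j \<in> {1..k}" using jp_ex[OF p] j_def by simp
    have pa: "p \<in> prime_factors (a j)" using P_iff[OF j] p j_def by simp
    have "p dvd t j \<longleftrightarrow> p \<in> {q\<in>prime_factors (a j). f q \<le> Z j}"
      using j Ps_prime[OF p] unfolding t_def restrict_apply' [OF j]
      by (intro prime_dvd_prod_primes_iff) auto
    then have iff: "p dvd t j \<longleftrightarrow> f p \<le> Z j" using pa by simp
    show "f p \<in> (if p dvd t (jp p) then {jp p..Z (jp p)} else {Z (jp p)+1..k+1})"
      using iff rng p j_def by auto
  next
    fix p assume "p \<notin> Ps" then show "f p = undefined" using ext by (simp add: extensional_def)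
  qed
  ultimately show ?thesis by blast
qed

lemma adm_cover:
  assumes "d \<in> admissible_d k a"
  shows "\<exists>t\<in>Ts. \<exists>f\<in>Ft t. box d = box (df f)"
proof -
  have dPi: "d \<in> {1..k} \<rightarrow>\<^sub>E {1..}" and ddvd: "\<forall>i\<in>{1..k}. (\<Prod>j=1..i. d j) dvd Aprod i"
    using assms unfolding admissible_d_def Aprod_def by auto
  have dpos: "i \<in> {1..k} \<Longrightarrow> d i \<ge> 1" for i using dPi by (auto simp: PiE_iff)
  define D where "D = (\<Prod>j=1..k. d j)"
  have DA: "D dvd Aprod k"
  proof (cases "k = 0")
    case True then show ?thesis by (simp add: D_def)
  next
    case False then show ?thesis using ddvd D_def by auto
  qed
  have sqfD: "squarefree D" using squarefree_mono[OF DA sqfA] .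
  have diD: "i \<in> {1..k} \<Longrightarrow> d i dvd D" for i unfolding D_def by (intro dvd_prodI) auto
  have sqfd: "i \<in> {1..k} \<Longrightarrow> squarefree (d i)" for i using squarefree_mono[OF diD sqfD] .
  have uniq: "i = i'" if "i \<in> {1..k}" "i' \<in> {1..k}" "prime p" "p dvd d i" "p dvd d i'" for i i' p
  proof (rule ccontr)
    assume "i \<noteq> i'"
    then show False using sqf_two[of "{1..k}" i i' d p] that sqfD unfolding D_def by auto
  qed
  have pfP: "p \<in> Ps" if "i \<in> {1..k}" "p \<in> prime_factors (d i)" for i p
  proof -
    have "p dvd Aprod k" using that diD DA by (auto intro: dvd_trans)
    then show ?thesis unfolding Ps_def using that Ak0 by (auto intro: prime_factorsI)
  qed
  define f where "f = restrict (\<lambda>p. if \<exists>i\<in>{1..k}. p dvd d i then (THE i. i\<in>{1..k} \<and> p dvd d i) else k+1) Ps"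
  have fval: "f p = i" if "p \<in> Ps" "i \<in> {1..k}" "p dvd d i" for p i
  proof -
    have "(THE i. i\<in>{1..k} \<and> p dvd d i) = i"
      using that uniq Ps_prime[OF that(1)] by (intro the_equality) auto
    then show ?thesis unfolding f_def using that by auto
  qed
  have fnone: "f p = k+1" if "p \<in> Ps" "\<not>(\<exists>i\<in>{1..k}. p dvd d i)" for p
    unfolding f_def using that by auto
  have dfeq: "df f i = d i" if i: "i \<in> {1..k}" for i
  proof -
    have "{p\<in>Ps. f p = i} = prime_factors (d i)"
    proof (intro equalityI subsetI)
      fix p assume p: "p \<in> {p\<in>Ps. f p = i}"
      show "p \<in> prime_factors (d i)"
      proof (cases "\<exists>i'\<in>{1..k}. p dvd d i'")
        case True
        then obtain i' where i': "i' \<in> {1..k}" "p dvd d i'" by blast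
        then have "i' = i" using fval p by auto
        then show ?thesis using i' Ps_prime p dpos[OF i] by (auto intro: prime_factorsI)
      next
        case False
        then have "f p = k+1" using fnone p by auto
        then show ?thesis using p i by auto
      qed
    next
      fix p assume p: "p \<in> prime_factors (d i)"
      then show "p \<in> {p\<in>Ps. f p = i}" using pfP[OF i p] fval[OF _ i] by auto
    qed
    then show ?thesis unfolding df_def using sqf_prod_pf[OF sqfd[OF i]] by simp
  qed
  have boxeq: "box d = box (df f)" unfolding box_def by (rule PiE_cong) (simp add: dfeq)
  have frange: "\<forall>p\<in>Ps. jp p \<le> f p \<and> f p \<le> k+1"
  proof
    fix p assume p: "p \<in> Ps"
    show "jp p \<le> f p \<and> f p \<le> k+1"
    proof (cases "\<exists>i\<in>{1..k}. p dvd d i")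
      case True
      then obtain i where i: "i \<in> {1..k}" "p dvd d i" by blast
      have fp: "f p = i" using fval[OF p i] .
      have "d i dvd (\<Prod>j=1..i. d j)" using i by (intro dvd_prodI) auto
      then have "p dvd Aprod i" using ddvd i by (meson dvd_trans)
      then obtain j where j: "j \<in> {1..i}" "p dvd a j"
        using prime_dvd_prod_iff[of "{1..i}" p a] Ps_prime[OF p] unfolding Aprod_def by auto
      have "jp p = j" using jp_unique[OF p, of j] j i by auto
      then show ?thesis using fp j i by auto
    next
      case False
      then show ?thesis using fnone[OF p] jp_ex[OF p] by auto
    qed
  qed
  have "f \<in> extensional Ps" unfolding f_def by simp
  then obtain t where "t \<in> Ts" "f \<in> Ft t" using f_in_Ft frange by blast
  then show ?thesis using boxeq by blast
qed

end


context setup2 begin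

definition Mk :: "(nat \<Rightarrow> real) measure" where "Mk = PiM {1..k} (\<lambda>_. lborel)"
definition mi where "mi i = (GREATEST j. j \<le> k \<and> Z j < i)"
definition sg where "sg t f i = \<Prod>{p\<in>St t. f p = i}"
definition bb :: "(nat \<Rightarrow> nat) \<Rightarrow> (nat \<Rightarrow> real) set" where
  "bb s = PiE {1..k} (\<lambda>i. {ln (real (s i)) - ln 2 ..< ln (real (s i)) + ln (real (Aprod (mi i)))})"
definition Pz where "Pz = (\<Prod>j=0..k. ln (2 * real (Aprod j)) ^ (Z (j+1) - Z j))"

lemma ln2pos: "(0::real) < ln 2" by simp

lemma mi_eq: assumes "j \<le> k" "Z j < i" "i \<le> Z (j+1)" shows "mi i = j"
  unfolding mi_def
proof (rule Greatest_equality)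
  show "j \<le> k \<and> Z j < i" using assms by simp
next
  fix y assume y: "y \<le> k \<and> Z y < i"
  show "y \<le> j"
  proof (rule ccontr)
    assume "\<not> y \<le> j"
    then have "Z (j+1) \<le> Z y" using Zmono'[of "j+1" y] y by simp
    then show False using y assms by simp
  qed
qed

lemma mi_le: assumes "1 \<le> i" shows "mi i \<le> k" "Z (mi i) < i"
proof -
  have "mi i \<le> k \<and> Z (mi i) < i" unfolding mi_def
    by (rule GreatestI_ex_nat[where b=k]) (use assms Z0 in auto)
  then show "mi i \<le> k" "Z (mi i) < i" by auto
qed

lemma mi_ge: "j \<le> k \<Longrightarrow> Z j < i \<Longrightarrow> j \<le> mi i"
  unfolding mi_def by (rule Greatest_le_nat[where b=k]) auto

lemma mi_regroup:
  fixes h :: "nat \<Rightarrow> real"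
  shows "(\<Prod>i\<in>{1..k}. h (mi i)) = (\<Prod>j=0..k. h j ^ (Z (j+1) - Z j))"
proof -
  have gen: "n \<le> k \<Longrightarrow> (\<Prod>i\<in>{1..Z (Suc n)}. h (mi i)) = (\<Prod>j=0..n. h j ^ (Z (Suc j) - Z j))" for n
  proof (induction n)
    case 0
    have "(\<Prod>i\<in>{1..Z (Suc 0)}. h (mi i)) = (\<Prod>i\<in>{1..Z (Suc 0)}. h 0)"
      by (rule prod.cong) (auto intro!: arg_cong[where f=h] mi_eq simp: Z0)
    then show ?case by (simp add: Z0)
  next
    case (Suc n)
    have le: "Z (Suc n) \<le> Z (Suc (Suc n))" using Zmono Suc.prems by simp
    have un: "{1..Z (Suc (Suc n))} = {1..Z (Suc n)} \<union> {Z (Suc n)+1..Z (Suc (Suc n))}"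
      using le by auto
    have "(\<Prod>i\<in>{1..Z (Suc (Suc n))}. h (mi i))
        = (\<Prod>i\<in>{1..Z (Suc n)}. h (mi i)) * (\<Prod>i\<in>{Z (Suc n)+1..Z (Suc (Suc n))}. h (mi i))"
      unfolding un by (rule prod.union_disjoint) auto
    also have "(\<Prod>i\<in>{Z (Suc n)+1..Z (Suc (Suc n))}. h (mi i)) = (\<Prod>i\<in>{Z (Suc n)+1..Z (Suc (Suc n))}. h (Suc n))"
      by (rule prod.cong) (use Suc.prems in \<open>auto intro!: arg_cong[where f=h] mi_eq\<close>)
    also have "\<dots> = h (Suc n) ^ (Z (Suc (Suc n)) - Z (Suc n))" by simp
    finally show ?case using Suc by simp
  qed
  show ?thesis using gen[of k] Zk by simp
qed

lemma box_meas: "box d \<in> sets Mk"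
  unfolding box_def Mk_def by (rule sets_PiM_I_finite) auto

lemma bb_meas: "bb s \<in> sets Mk"
  unfolding bb_def Mk_def by (rule sets_PiM_I_finite) auto

lemma emeasure_box:
  assumes "\<forall>i\<in>{1..k}. d i \<ge> 1"
  shows "emeasure Mk (box d) = ennreal (ln 2 ^ k)"
proof -
  have "emeasure Mk (box d) = (\<Prod>i\<in>{1..k}. emeasure lborel {ln (real (d i) / 2)..<ln (real (d i))})"
    unfolding Mk_def box_def by (rule product_sigma_finite.emeasure_PiM[OF psf]) auto
  also have "\<dots> = (\<Prod>i\<in>{1..k}. ennreal (ln 2))"
  proof (rule prod.cong[OF refl])
    fix i assume i: "i \<in> {1..k}"
    then have "real (d i) > 0" using assms by force
    then have "ln (real (d i) / 2) = ln (real (d i)) - ln 2" by (simp add: ln_div)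
    then show "emeasure lborel {ln (real (d i) / 2)..<ln (real (d i))} = ennreal (ln 2)"
      by (simp add: emeasure_lborel_Ico)
  qed
  also have "\<dots> = ennreal (ln 2 ^ k)" by (simp add: ennreal_power)
  finally show ?thesis .
qed

lemma Pz_nonneg: "Pz \<ge> 0"
  unfolding Pz_def
proof (intro prod_nonneg ballI zero_le_power)
  fix j assume "j \<in> {0..k}"
  then have "real (Aprod j) \<ge> 1" using A_pos by simp
  then show "0 \<le> ln (2 * real (Aprod j))" by simp
qed

lemma emeasure_bb: "emeasure Mk (bb s) = ennreal Pz"
proof -
  have "emeasure Mk (bb s) = (\<Prod>i\<in>{1..k}. emeasure lborel {ln (real (s i)) - ln 2 ..< ln (real (s i)) + ln (real (Aprod (mi i)))})"
    unfolding Mk_def bb_def by (rule product_sigma_finite.emeasure_PiM[OF psf]) auto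
  also have "\<dots> = (\<Prod>i\<in>{1..k}. ennreal (ln (2 * real (Aprod (mi i)))))"
  proof (rule prod.cong[OF refl])
    fix i assume i: "i \<in> {1..k}"
    then have "real (Aprod (mi i)) \<ge> 1" using A_pos mi_le[of i] by simp
    then have "ln (2 * real (Aprod (mi i))) = ln 2 + ln (real (Aprod (mi i)))" "ln (real (Aprod (mi i))) \<ge> 0"
      by (simp_all add: ln_mult)
    then have le: "ln (real (s i)) - ln 2 \<le> ln (real (s i)) + ln (real (Aprod (mi i)))"
      using ln2pos by linarith
    from \<open>ln (2 * _) = _\<close> have eq: "ln (real (s i)) + ln (real (Aprod (mi i))) - (ln (real (s i)) - ln 2) = ln (2 * real (Aprod (mi i)))"
      by simp
    show "emeasure lborel {ln (real (s i)) - ln 2 ..< ln (real (s i)) + ln (real (Aprod (mi i)))} = ennreal (ln (2 * real (Aprod (mi i))))"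
      using emeasure_lborel_Ico[OF le] eq by simp
  qed
  also have "\<dots> = ennreal (\<Prod>i\<in>{1..k}. ln (2 * real (Aprod (mi i))))"
  proof (rule prod_ennreal)
    fix i assume i: "i \<in> {1..k}"
    then have "real (Aprod (mi i)) \<ge> 1" using A_pos mi_le[of i] by simp
    then show "0 \<le> ln (2 * real (Aprod (mi i)))" by simp
  qed
  also have "\<dots> = ennreal Pz" unfolding Pz_def using mi_regroup[of "\<lambda>j. ln (2 * real (Aprod j))"] by simp
  finally show ?thesis .
qed

lemma box_sub:
  assumes t: "t \<in> Ts" and f: "f \<in> Ft t"
  shows "box (df f) \<subseteq> bb (sg t f)"
proof
  fix x assume x: "x \<in> box (df f)"
  show "x \<in> bb (sg t f)" unfolding bb_def
  proof (rule PiE_I)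
    fix i assume i: "i \<in> {1..k}"
    have xi: "x i \<in> {ln (real (df f i) / 2) ..< ln (real (df f i))}"
      using x i unfolding box_def by auto
    have StP: "St t \<subseteq> Ps" unfolding St_def by auto
    have spl: "{p\<in>Ps. f p = i} = {p\<in>St t. f p = i} \<union> {p\<in>Ps - St t. f p = i}" using StP by auto
    define S where "S = \<Prod>{p\<in>St t. f p = i}"
    define R where "R = \<Prod>{p\<in>Ps - St t. f p = i}"
    have dSR: "df f i = S * R" unfolding df_def S_def R_def spl
      by (rule prod.union_disjoint) (use Ps_fin St_fin in auto)
    have S1: "S \<ge> 1" unfolding S_def using StP Ps_prime by (intro prod_primes_pos) auto
    have R1: "R \<ge> 1" unfolding R_def using Ps_prime by (intro prod_primes_pos) auto
    have Rdvd: "R dvd Aprod (mi i)" unfolding R_def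
    proof (rule prod_primes_dvd_nat)
      show "finite {p \<in> Ps - St t. f p = i}" using Ps_fin by simp
    next
      fix p assume p: "p \<in> {p \<in> Ps - St t. f p = i}"
      then have pP: "p \<in> Ps" and nd: "\<not> p dvd t (jp p)" and fp: "f p = i" unfolding St_def by auto
      have "f p \<in> {Z (jp p)+1..k+1}" using f pP nd unfolding Ft_def by (auto simp: PiE_iff)
      then have "Z (jp p) < i" using fp by simp
      moreover have "jp p \<le> k" "1 \<le> jp p" using jp_ex[OF pP] by auto
      ultimately have "jp p \<le> mi i" using mi_ge by simp
      then have "a (jp p) dvd Aprod (mi i)" using a_dvd_A \<open>1 \<le> jp p\<close> by simp
      then show "prime p \<and> p dvd Aprod (mi i)" using jp_ex[OF pP] Ps_prime[OF pP] by (meson dvd_trans)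
    qed
    have "R \<le> Aprod (mi i)" using Rdvd A_pos[of "mi i"] mi_le[of i] i by (intro dvd_imp_le) auto
    then have lnR: "ln (real R) \<le> ln (real (Aprod (mi i)))" "ln (real R) \<ge> 0" using R1 by simp_all
    have lnd: "ln (real (df f i)) = ln (real S) + ln (real R)" using S1 R1 dSR by (simp add: ln_mult)
    have lnd2: "ln (real (df f i) / 2) = ln (real S) + ln (real R) - ln 2" using S1 R1 dSR by (simp add: ln_mult ln_div)
    have sgS: "sg t f i = S" unfolding sg_def S_def ..
    show "x i \<in> {ln (real (sg t f i)) - ln 2 ..< ln (real (sg t f i)) + ln (real (Aprod (mi i)))}"
      using xi lnR lnd lnd2 sgS by auto
  next
    fix i assume "i \<notin> {1..k}" then show "x i = undefined" using x unfolding box_def by (auto simp: PiE_iff extensional_def)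
  qed
qed

lemma restrict_Gt: assumes "f \<in> Ft t" shows "restrict f (St t) \<in> Gt t" "sg t (restrict f (St t)) = sg t f"
proof -
  show "restrict f (St t) \<in> Gt t" unfolding Gt_def
    using assms unfolding Ft_def St_def by (auto simp: PiE_iff)
  show "sg t (restrict f (St t)) = sg t f" unfolding sg_def by (intro ext arg_cong[where f=Prod]) auto
qed

end


context setup2 begin

lemma df_pos: "df f i \<ge> 1" unfolding df_def using Ps_prime by (intro prod_primes_pos) auto

lemma Vbound:
  assumes t: "t \<in> Ts"
  shows "emeasure Mk (\<Union>f\<in>Ft t. box (df f)) \<le> ennreal (min (real (card (Gt t)) * Pz) (real (card (Ft t)) * ln 2 ^ k))"
proof -
  have b1: "emeasure Mk (\<Union>f\<in>Ft t. box (df f)) \<le> ennreal (real (card (Ft t)) * ln 2 ^ k)"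
  proof -
    have "emeasure Mk (\<Union>f\<in>Ft t. box (df f)) \<le> (\<Sum>f\<in>Ft t. emeasure Mk (box (df f)))"
      by (rule emeasure_subadditive_finite) (auto simp: Ft_fin box_meas)
    also have "\<dots> = (\<Sum>f\<in>Ft t. ennreal (ln 2 ^ k))"
      by (rule sum.cong[OF refl], rule emeasure_box) (use df_pos in auto)
    also have "\<dots> = ennreal (real (card (Ft t)) * ln 2 ^ k)"
      by (simp add: ennreal_of_nat_eq_real_of_nat ennreal_mult)
    finally show ?thesis .
  qed
  have b2: "emeasure Mk (\<Union>f\<in>Ft t. box (df f)) \<le> ennreal (real (card (Gt t)) * Pz)"
  proof -
    have sub: "(\<Union>f\<in>Ft t. box (df f)) \<subseteq> (\<Union>g\<in>Gt t. bb (sg t g))"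
    proof
      fix x assume "x \<in> (\<Union>f\<in>Ft t. box (df f))"
      then obtain f where f: "f \<in> Ft t" "x \<in> box (df f)" by blast
      then have "x \<in> bb (sg t (restrict f (St t)))" using box_sub[OF t f(1)] restrict_Gt[OF f(1)] by auto
      then show "x \<in> (\<Union>g\<in>Gt t. bb (sg t g))" using restrict_Gt[OF f(1)] by blast
    qed
    have "emeasure Mk (\<Union>f\<in>Ft t. box (df f)) \<le> emeasure Mk (\<Union>g\<in>Gt t. bb (sg t g))"
      by (rule emeasure_mono[OF sub]) (auto intro!: sets.finite_UN simp: Gt_fin bb_meas)
    also have "\<dots> \<le> (\<Sum>g\<in>Gt t. emeasure Mk (bb (sg t g)))"
      by (rule emeasure_subadditive_finite) (auto simp: Gt_fin bb_meas)
    also have "\<dots> = (\<Sum>g\<in>Gt t. ennreal Pz)" by (simp add: emeasure_bb)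
    also have "\<dots> = ennreal (real (card (Gt t)) * Pz)"
      by (simp add: ennreal_of_nat_eq_real_of_nat ennreal_mult Pz_nonneg)
    finally show ?thesis .
  qed
  have "emeasure Mk (\<Union>f\<in>Ft t. box (df f)) \<le> min (ennreal (real (card (Gt t)) * Pz)) (ennreal (real (card (Ft t)) * ln 2 ^ k))"
    using b1 b2 by simp
  also have "\<dots> = ennreal (min (real (card (Gt t)) * Pz) (real (card (Ft t)) * ln 2 ^ k))"
    by (rule min_ennreal) (auto simp: Pz_nonneg)
  finally show ?thesis .
qed

lemma main:
  "measure Mk (\<Union>d\<in>admissible_d k a. box d) \<le> (\<Sum>t\<in>Ts. min (real (card (Gt t)) * Pz) (real (card (Ft t)) * ln 2 ^ k))"
proof -
  let ?U = "\<Union>d\<in>admissible_d k a. box d"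
  let ?V = "\<lambda>t. \<Union>f\<in>Ft t. box (df f)"
  have sub: "?U \<subseteq> (\<Union>t\<in>Ts. ?V t)" using adm_cover by blast
  have measV: "?V t \<in> sets Mk" for t by (auto intro!: sets.finite_UN simp: Ft_fin box_meas)
  have "emeasure Mk ?U \<le> emeasure Mk (\<Union>t\<in>Ts. ?V t)"
    by (rule emeasure_mono[OF sub], rule sets.finite_UN) (auto simp: Ts_fin measV)
  also have "\<dots> \<le> (\<Sum>t\<in>Ts. emeasure Mk (?V t))"
    by (rule emeasure_subadditive_finite) (auto simp: Ts_fin measV)
  also have "\<dots> \<le> (\<Sum>t\<in>Ts. ennreal (min (real (card (Gt t)) * Pz) (real (card (Ft t)) * ln 2 ^ k)))"
    by (rule sum_mono) (rule Vbound)
  also have "\<dots> = ennreal (\<Sum>t\<in>Ts. min (real (card (Gt t)) * Pz) (real (card (Ft t)) * ln 2 ^ k))"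
    by (rule sum_ennreal) (auto simp: Pz_nonneg)
  finally have le: "emeasure Mk ?U \<le> ennreal (\<Sum>t\<in>Ts. min (real (card (Gt t)) * Pz) (real (card (Ft t)) * ln 2 ^ k))" .
  have nn: "0 \<le> (\<Sum>t\<in>Ts. min (real (card (Gt t)) * Pz) (real (card (Ft t)) * ln 2 ^ k))"
    by (rule sum_nonneg) (auto simp: Pz_nonneg)
  have "measure Mk ?U = enn2real (emeasure Mk ?U)" by (simp add: measure_def)
  also have "\<dots> \<le> enn2real (ennreal (\<Sum>t\<in>Ts. min (real (card (Gt t)) * Pz) (real (card (Ft t)) * ln 2 ^ k)))"
    by (rule enn2real_mono[OF le]) simp
  also have "\<dots> = (\<Sum>t\<in>Ts. min (real (card (Gt t)) * Pz) (real (card (Ft t)) * ln 2 ^ k))"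
    using nn by simp
  finally show ?thesis .
qed

lemma main2:
  "measure Mk (\<Union>d\<in>admissible_d k a. box d) \<le>
    (\<Sum>t\<in>Ts. (\<Prod>j=1..k. real (Z j + 1 - j) ^ omega (t j)) *
       min Pz (ln 2 ^ k * (\<Prod>j=1..k. real (k + 1 - Z j) ^ omega (a j div t j))))"
proof -
  have "(\<Sum>t\<in>Ts. min (real (card (Gt t)) * Pz) (real (card (Ft t)) * ln 2 ^ k))
     = (\<Sum>t\<in>Ts. (\<Prod>j=1..k. real (Z j + 1 - j) ^ omega (t j)) *
       min Pz (ln 2 ^ k * (\<Prod>j=1..k. real (k + 1 - Z j) ^ omega (a j div t j))))"
  proof (rule sum.cong[OF refl])
    fix t assume t: "t \<in> Ts"
    define c where "c = (\<Prod>j=1..k. real (Z j + 1 - j) ^ omega (t j))"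
    define e where "e = (\<Prod>j=1..k. real (k + 1 - Z j) ^ omega (a j div t j))"
    have c0: "c \<ge> 0" unfolding c_def by (intro prod_nonneg) auto
    have cG: "real (card (Gt t)) = c" using card_Gt[OF t] c_def by simp
    have cF: "real (card (Ft t)) = c * e" using card_Ft[OF t] unfolding c_def e_def by (simp add: prod.distrib)
    have "min (c * Pz) (c * e * ln 2 ^ k) = c * min Pz (ln 2 ^ k * e)"
      using min_mult_distrib_left[of c Pz "ln 2 ^ k * e"] c0 by (simp add: mult_ac)
    then show "min (real (card (Gt t)) * Pz) (real (card (Ft t)) * ln 2 ^ k)
        = (\<Prod>j=1..k. real (Z j + 1 - j) ^ omega (t j)) *
       min Pz (ln 2 ^ k * (\<Prod>j=1..k. real (k + 1 - Z j) ^ omega (a j div t j)))"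
      using cG cF unfolding c_def e_def by simp
  qed
  then show ?thesis using main by simp
qed

end

theorem lemma2p3:
  fixes k :: nat and z :: "nat \<Rightarrow> int" and a :: "nat \<Rightarrow> nat"
  assumes "z 0 = 0" and "z (k + 1) = int k"
    and "\<forall>i\<le>k. z i \<le> z (Suc i)"
    and "\<forall>i\<in>{1..k}. z i \<ge> int i - 1"
    and "\<forall>j\<in>{1..k}. a j \<ge> 1"
    and "squarefree (\<Prod>j=1..k. a j)"
  shows "Lk k a \<le>
    (\<Sum>d \<in> PiE {1..k} (\<lambda>j. {e. e dvd a j}).
       (\<Prod>j=1..k. (real_of_int (z j - int j + 1)) ^ omega (d j)) *
       min (\<Prod>j=0..k. (ln (2 * real (\<Prod>i=1..j. a i))) ^ nat (z (j + 1) - z j))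
           ((ln 2) ^ k * (\<Prod>j=1..k. (real_of_int (int k - z j + 1)) ^ omega (a j div d j))))"
proof -
  define Z where "Z = (\<lambda>j. nat (z j))"
  have znn: "j \<le> k + 1 \<Longrightarrow> z j \<ge> 0" for j
  proof (induction j)
    case 0 then show ?case using assms(1) by simp
  next
    case (Suc j) then show ?case using assms(3) by force
  qed
  have zZ: "j \<le> k + 1 \<Longrightarrow> z j = int (Z j)" for j using znn unfolding Z_def by simp
  interpret S: setup2 k a Z
  proof
    show "\<forall>j\<in>{1..k}. a j \<ge> 1" "squarefree (\<Prod>j=1..k. a j)" using assms by auto
    show "Z 0 = 0" "Z (k+1) = k" using assms unfolding Z_def by auto
    show "\<forall>i\<le>k. Z i \<le> Z (Suc i)" using assms(3) unfolding Z_def by auto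
    show "\<forall>i\<in>{1..k}. i \<le> Z i + 1" using assms(4) unfolding Z_def by force
  qed
  have Zk': "j \<le> k + 1 \<Longrightarrow> Z j \<le> k" for j by (rule S.Z_le_k)
  have L: "Lk k a = measure S.Mk (\<Union>d\<in>admissible_d k a. S.box d)"
    unfolding Lk_def S.Mk_def S.box_def ..
  have eq: "(\<Sum>t\<in>S.Ts. (\<Prod>j=1..k. real (Z j + 1 - j) ^ omega (t j)) *
       min S.Pz (ln 2 ^ k * (\<Prod>j=1..k. real (k + 1 - Z j) ^ omega (a j div t j))))
     = (\<Sum>d \<in> PiE {1..k} (\<lambda>j. {e. e dvd a j}).
       (\<Prod>j=1..k. (real_of_int (z j - int j + 1)) ^ omega (d j)) *
       min (\<Prod>j=0..k. (ln (2 * real (\<Prod>i=1..j. a i))) ^ nat (z (j + 1) - z j))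
           ((ln 2) ^ k * (\<Prod>j=1..k. (real_of_int (int k - z j + 1)) ^ omega (a j div d j))))"
  proof -
    have c1: "real (Z j + 1 - j) = real_of_int (z j - int j + 1)" if "j \<in> {1..k}" for j
    proof -
      have "j \<le> Z j + 1" using S.Zlow that by auto
      moreover have "z j = int (Z j)" using zZ that by auto
      ultimately show ?thesis by (simp add: of_nat_diff)
    qed
    have c2: "real (k + 1 - Z j) = real_of_int (int k - z j + 1)" if "j \<in> {1..k}" for j
    proof -
      have "Z j \<le> k" using Zk' that by auto
      moreover have "z j = int (Z j)" using zZ that by auto
      ultimately show ?thesis by (simp add: of_nat_diff)
    qed
    have c3: "Z (j+1) - Z j = nat (z (j + 1) - z j)" if "j \<in> {0..k}" for j
      using zZ[of j] zZ[of "j+1"] that by auto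
    have Pz: "S.Pz = (\<Prod>j=0..k. (ln (2 * real (\<Prod>i=1..j. a i))) ^ nat (z (j + 1) - z j))"
      unfolding S.Pz_def S.Aprod_def using c3 by (intro prod.cong refl) auto
    show ?thesis unfolding S.Ts_def Pz
    proof (rule sum.cong[OF refl])
      fix d assume "d \<in> PiE {1..k} (\<lambda>j. {e. e dvd a j})"
      have p1: "(\<Prod>j=1..k. real (Z j + 1 - j) ^ omega (d j)) = (\<Prod>j=1..k. real_of_int (z j - int j + 1) ^ omega (d j))"
        by (rule prod.cong[OF refl]) (simp only: c1)
      have p2: "(\<Prod>j=1..k. real (k + 1 - Z j) ^ omega (a j div d j)) = (\<Prod>j=1..k. real_of_int (int k - z j + 1) ^ omega (a j div d j))"
        by (rule prod.cong[OF refl]) (simp only: c2)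
      show "(\<Prod>j=1..k. real (Z j + 1 - j) ^ omega (d j)) *
       min (\<Prod>j=0..k. (ln (2 * real (\<Prod>i=1..j. a i))) ^ nat (z (j + 1) - z j)) (ln 2 ^ k * (\<Prod>j=1..k. real (k + 1 - Z j) ^ omega (a j div d j)))
       = (\<Prod>j=1..k. (real_of_int (z j - int j + 1)) ^ omega (d j)) *
       min (\<Prod>j=0..k. (ln (2 * real (\<Prod>i=1..j. a i))) ^ nat (z (j + 1) - z j))
           ((ln 2) ^ k * (\<Prod>j=1..k. (real_of_int (int k - z j + 1)) ^ omega (a j div d j)))"
        unfolding p1 p2 ..
    qed
  qed
  show ?thesis using S.main2 L eq by simp
qed


end
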